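(* Let $V$ be a vertex algebra, $g$ an automorphism of $V$ of finite order $T$, $W$ a $g$-twisted $\phi$-coordinated $V$-module and $U\subseteq W$ a subset. Then the submodule $\langle U\rangle$ generated by $U$ (the smallest submodule of $W$ containing $U$) equals $\mathrm{span}\{v_nw: v\in V,\ n\in(1/T)\mathbb Z,\ w\in U\}$.
   Context: $V$ is a vertex algebra with vacuum $\mathbf 1$, $Y(v,x)=\sum_{k\in\mathbb Z}v_kx^{-k-1}$; $g$ is an automorphism with $g^T=1$. A $g$-twisted $\phi$-coordinated $V$-module is a vector space $W$ with a linear map $Y_W(\cdot,x):V\to\mathrm{Hom}(W,W((x^{1/T})))$, $Y_W(v,x)=\sum_{n\in(1/T)\mathbb Z}v_nx^{-n-1}$, such that: (i) $Y_W(\mathbf 1,x)=\mathrm{id}_W$; (ii) $Y_W(gv,x)=\lim_{x^{1/T}\to\omega_T^{-1}x^{1/T}}Y_W(v,x)$ with $\omega_T=e^{-2\pi\sqrt{-1}/T}$; (iii) for $u,v\in V$ there is $k\in\mathbb N$ with $(x_1-x_2)^kY_W(u,x_1)Y_W(v,x_2)\in\mathrm{Hom}(W,W((x_1^{1/T},x_2^{1/T})))$ and $x_2^k(e^{x_0}-1)^kY_W(Y(u,x_0)v,x_2)=\big((x_1-x_2)^kY_W(u,x_1)Y_W(v,x_2)\big)|_{x_1^{1/T}=(x_2e^{x_0})^{1/T}}$ (where $x_1^{j/T}\mapsto x_2^{j/T}e^{jx_0/T}$). A submodule is a subspace invariant under all $v_n$. *)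

theory Defs
  imports Complex_Main "HOL-Library.Groups_Big_Fun"
begin

text \<open>The vertex operator of V is given by its modes: VY u n v = u_n v (n an integer).
  For a g-twisted phi-coordinated module with period T the modes are indexed by
  n in (1/T)Z; we write WY v j w for v_(j/T) w, with j an integer.\<close>

definition is_linear :: "(complex \<Rightarrow> 'a::ab_group_add \<Rightarrow> 'a) \<Rightarrow> (complex \<Rightarrow> 'b::ab_group_add \<Rightarrow> 'b) \<Rightarrow> ('a \<Rightarrow> 'b) \<Rightarrow> bool"
  where "is_linear sA sB f \<longleftrightarrow> Vector_Spaces.linear sA sB f"

text \<open>Vertex algebra: linearity, truncation, vacuum, creation and Jacobi identity
  (in its component form, the Borcherds identity).\<close>
definition vertex_algebra ::
  "(complex \<Rightarrow> 'v::ab_group_add \<Rightarrow> 'v) \<Rightarrow> 'v \<Rightarrow> ('v \<Rightarrow> int \<Rightarrow> 'v \<Rightarrow> 'v) \<Rightarrow> bool" where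
  "vertex_algebra sV vac VY \<longleftrightarrow>
     vector_space sV \<and>
     (\<forall>u n. is_linear sV sV (VY u n)) \<and>
     (\<forall>n v. is_linear sV sV (\<lambda>u. VY u n v)) \<and>
     (\<forall>u v. \<exists>N. \<forall>n\<ge>N. VY u n v = 0) \<and>
     (\<forall>n v. VY vac n v = (if n = -1 then v else 0)) \<and>
     (\<forall>v n. n \<ge> 0 \<longrightarrow> VY v n vac = 0) \<and>
     (\<forall>v. VY v (-1) vac = v) \<and>
     (\<forall>u v w l m n.
        (\<Sum>i::nat. sV ((of_int m gchoose i) :: complex) (VY (VY u (l + int i) v) (m + n - int i) w))
        = (\<Sum>i::nat. sV ((-1) ^ i * (of_int l gchoose i))
             (VY u (l + m - int i) (VY v (n + int i) w)
              - sV ((-1) powi l) (VY v (l + n - int i) (VY u (m + int i) w)))))"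

definition va_automorphism ::
  "(complex \<Rightarrow> 'v::ab_group_add \<Rightarrow> 'v) \<Rightarrow> 'v \<Rightarrow> ('v \<Rightarrow> int \<Rightarrow> 'v \<Rightarrow> 'v) \<Rightarrow> ('v \<Rightarrow> 'v) \<Rightarrow> bool" where
  "va_automorphism sV vac VY g \<longleftrightarrow>
     is_linear sV sV g \<and> bij g \<and> g vac = vac \<and> (\<forall>u n v. g (VY u n v) = VY (g u) n (g v))"

definition omegaT :: "nat \<Rightarrow> complex" where
  "omegaT T = exp (- 2 * of_real pi * \<i> / of_nat T)"

text \<open>Coefficient of x1^(a/T) x2^(b/T) in (x1 - x2)^k Y_W(u,x1) Y_W(v,x2) w.\<close>
definition prodcoeff ::
  "(complex \<Rightarrow> 'w::ab_group_add \<Rightarrow> 'w) \<Rightarrow> nat \<Rightarrow> ('v \<Rightarrow> int \<Rightarrow> 'w \<Rightarrow> 'w)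
   \<Rightarrow> nat \<Rightarrow> 'v \<Rightarrow> 'v \<Rightarrow> 'w \<Rightarrow> int \<Rightarrow> int \<Rightarrow> 'w" where
  "prodcoeff sW T WY k u v w a b =
     (\<Sum>s\<le>k. sW (of_nat (k choose s) * (-1) ^ s)
        (WY u (int T * int (k - s) - int T - a) (WY v (int T * int s - int T - b) w)))"

text \<open>Coefficient of x2^(c/T) x0^p (p an integer) in
  x2^k (e^x0 - 1)^k Y_W(Y(u,x0)v, x2) w.\<close>
definition lhscoeff ::
  "(complex \<Rightarrow> 'w::ab_group_add \<Rightarrow> 'w) \<Rightarrow> nat \<Rightarrow> ('v \<Rightarrow> int \<Rightarrow> 'v \<Rightarrow> 'v) \<Rightarrow> ('v \<Rightarrow> int \<Rightarrow> 'w \<Rightarrow> 'w)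
   \<Rightarrow> nat \<Rightarrow> 'v \<Rightarrow> 'v \<Rightarrow> 'w \<Rightarrow> int \<Rightarrow> int \<Rightarrow> 'w" where
  "lhscoeff sW T VY WY k u v w c p =
     (\<Sum>q::nat. sW (of_real (\<Sum>r\<le>k. real (k choose r) * (-1) ^ (k - r) * real r ^ q / fact q))
        (WY (VY u (int q - p - 1) v) (int T * int k - int T - c) w))"

text \<open>Coefficient of x2^(c/T) x0^p in the substitution x1^(a/T) := x2^(a/T) e^(a x0/T)
  applied to (x1 - x2)^k Y_W(u,x1) Y_W(v,x2) w (only nonnegative powers of x0 occur).\<close>
definition rhscoeff ::
  "(complex \<Rightarrow> 'w::ab_group_add \<Rightarrow> 'w) \<Rightarrow> nat \<Rightarrow> ('v \<Rightarrow> int \<Rightarrow> 'w \<Rightarrow> 'w)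
   \<Rightarrow> nat \<Rightarrow> 'v \<Rightarrow> 'v \<Rightarrow> 'w \<Rightarrow> int \<Rightarrow> int \<Rightarrow> 'w" where
  "rhscoeff sW T WY k u v w c p =
     (if p < 0 then 0 else
      (\<Sum>a::int. sW (of_real ((real_of_int a / real T) ^ nat p / fact (nat p)))
         (prodcoeff sW T WY k u v w a (c - a))))"

definition twisted_phi_module ::
  "(complex \<Rightarrow> 'v::ab_group_add \<Rightarrow> 'v) \<Rightarrow> 'v \<Rightarrow> ('v \<Rightarrow> int \<Rightarrow> 'v \<Rightarrow> 'v) \<Rightarrow> ('v \<Rightarrow> 'v) \<Rightarrow> nat
   \<Rightarrow> (complex \<Rightarrow> 'w::ab_group_add \<Rightarrow> 'w) \<Rightarrow> ('v \<Rightarrow> int \<Rightarrow> 'w \<Rightarrow> 'w) \<Rightarrow> bool" where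
  "twisted_phi_module sV vac VY g T sW WY \<longleftrightarrow>
     vector_space sW \<and>
     (\<forall>v j. is_linear sW sW (WY v j)) \<and>
     (\<forall>j w. is_linear sV sW (\<lambda>v. WY v j w)) \<and>
     (\<forall>v w. \<exists>N. \<forall>j\<ge>N. WY v j w = 0) \<and>
     (\<forall>j w. WY vac j w = (if j = - int T then w else 0)) \<and>
     (\<forall>v j w. WY (g v) j w = sW (omegaT T powi j) (WY v j w)) \<and>
     (\<forall>u v. \<exists>k::nat.
        (\<forall>w. \<exists>A B. \<forall>a b. a < A \<or> b < B \<longrightarrow> prodcoeff sW T WY k u v w a b = 0) \<and>
        (\<forall>w c p. lhscoeff sW T VY WY k u v w c p = rhscoeff sW T WY k u v w c p))"

definition is_submodule :: "(complex \<Rightarrow> 'w::ab_group_add \<Rightarrow> 'w) \<Rightarrow> ('v \<Rightarrow> int \<Rightarrow> 'w \<Rightarrow> 'w) \<Rightarrow> 'w set \<Rightarrow> bool"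
  where "is_submodule sW WY S \<longleftrightarrow>
     module.subspace sW S \<and> (\<forall>v j w. w \<in> S \<longrightarrow> WY v j w \<in> S)"

definition generated_submodule :: "(complex \<Rightarrow> 'w::ab_group_add \<Rightarrow> 'w) \<Rightarrow> ('v \<Rightarrow> int \<Rightarrow> 'w \<Rightarrow> 'w) \<Rightarrow> 'w set \<Rightarrow> 'w set"
  where "generated_submodule sW WY U = \<Inter>{S. is_submodule sW WY S \<and> U \<subseteq> S}"

end

theory Submission
  imports Defs
begin

context vector_space
begin

lemma vander_in:
  fixes z :: "'c \<Rightarrow> 'a"
  assumes "finite I" "inj_on z I" "subspace M"
    "\<And>p::nat. (\<Sum>a\<in>I. (z a ^ p) *s F a) \<in> M"
  shows "\<forall>a\<in>I. F a \<in> M"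
  using assms
proof (induction I arbitrary: F rule: finite_induct)
  case empty
  then show ?case by simp
next
  case (insert x I)
  define G where "G a = (z a - z x) *s F a" for a
  have "\<forall>a\<in>I. G a \<in> M"
  proof (rule insert.IH)
    show "inj_on z I" using insert.prems by (auto simp: inj_on_def)
    show "subspace M" by fact
    fix p :: nat
    have "(\<Sum>a\<in>I. (z a ^ p) *s G a) = (\<Sum>a\<in>insert x I. (z a ^ p) *s G a)"
      using insert.hyps by (simp add: G_def)
    also have "\<dots> = (\<Sum>a\<in>insert x I. (z a ^ Suc p) *s F a) - z x *s (\<Sum>a\<in>insert x I. (z a ^ p) *s F a)"
      by (simp add: G_def scale_sum_right sum_subtractf[symmetric] scale_left_diff_distrib algebra_simps)
    also have "\<dots> \<in> M"
    proof (intro subspace_diff subspace_scale)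
      show "(\<Sum>a\<in>insert x I. (z a ^ Suc p) *s F a) \<in> M" by (rule insert.prems(3))
      show "(\<Sum>a\<in>insert x I. (z a ^ p) *s F a) \<in> M" by (rule insert.prems(3))
    qed fact+
    finally show "(\<Sum>a\<in>I. (z a ^ p) *s G a) \<in> M" .
  qed
  then have FI: "\<forall>a\<in>I. F a \<in> M"
  proof (intro ballI)
    fix a assume a: "a \<in> I" "\<forall>a\<in>I. G a \<in> M"
    then have ne: "z a - z x \<noteq> 0" using insert.prems insert.hyps
      by (metis eq_iff_diff_eq_0 inj_on_contraD insertCI)
    have "F a = inverse (z a - z x) *s G a" using ne by (simp add: G_def)
    then show "F a \<in> M" using a insert.prems by (simp add: subspace_scale)
  qed
  have "F x = (\<Sum>a\<in>insert x I. (z a ^ 0) *s F a) - (\<Sum>a\<in>I. F a)"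
    using insert.hyps by simp
  also have "\<dots> \<in> M"
  proof (rule subspace_diff)
    show "(\<Sum>a\<in>insert x I. (z a ^ 0) *s F a) \<in> M" by (rule insert.prems(3))
    show "subspace M" by fact
    show "(\<Sum>a\<in>I. F a) \<in> M" using FI \<open>subspace M\<close> by (intro subspace_sum) auto
  qed
  finally show ?case using FI by simp
qed

lemma Sum_any_in:
  assumes "subspace M" "\<And>q. f q \<in> M"
  shows "Sum_any f \<in> M"
  unfolding Sum_any.expand_set using assms by (intro subspace_sum) auto

end

lemma key:
  fixes sV :: "complex \<Rightarrow> 'v::ab_group_add \<Rightarrow> 'v" and vac :: 'v
    and VY :: "'v \<Rightarrow> int \<Rightarrow> 'v \<Rightarrow> 'v" and g :: "'v \<Rightarrow> 'v" and T :: nat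
    and sW :: "complex \<Rightarrow> 'w::ab_group_add \<Rightarrow> 'w" and WY :: "'v \<Rightarrow> int \<Rightarrow> 'w \<Rightarrow> 'w"
  assumes T: "T > 0" and tw: "twisted_phi_module sV vac VY g T sW WY"
  shows "WY u m (WY v n w) \<in> module.span sW {WY x j w | x j. True}"
proof -
  interpret W: vector_space sW using tw unfolding twisted_phi_module_def by auto
  define M where "M = W.span {WY x j w | x j. True}"
  have sM: "W.subspace M" unfolding M_def by simp
  have lin: "\<And>v j. module_hom sW sW (WY v j)"
    using tw unfolding twisted_phi_module_def is_linear_def
    by (simp add: module_hom_iff_linear)
  have genM: "\<And>x j. WY x j w \<in> M" unfolding M_def by (rule W.span_base) auto
  obtain k where
     kA: "\<exists>A B. \<forall>a b. a < A \<or> b < B \<longrightarrow> prodcoeff sW T WY k u v w a b = 0"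
     and kE: "\<forall>c p. lhscoeff sW T VY WY k u v w c p = rhscoeff sW T WY k u v w c p"
    using tw unfolding twisted_phi_module_def by meson
  obtain A B where AB: "\<And>a b. a < A \<or> b < B \<Longrightarrow> prodcoeff sW T WY k u v w a b = 0"
    using kA by blast
  have lhsM: "lhscoeff sW T VY WY k u v w c p \<in> M" for c p
    unfolding lhscoeff_def
    by (intro W.Sum_any_in sM W.subspace_scale genM)
  have stepA: "prodcoeff sW T WY k u v w a0 b0 \<in> M" for a0 b0
  proof -
    define c where "c = a0 + b0"
    define F where "F a = prodcoeff sW T WY k u v w a (c - a)" for a
    have F0: "a \<notin> {A..c-B} \<Longrightarrow> F a = 0" for a unfolding F_def by (intro AB) auto
    have F0': "F a \<noteq> 0 \<Longrightarrow> A \<le> a \<and> a \<le> c - B" for a using F0[of a] by force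
    have "\<forall>a\<in>{A..c-B}. F a \<in> M"
    proof (rule W.vander_in[where z = "\<lambda>a. of_int a"])
      show "inj_on (\<lambda>a. complex_of_int a) {A..c - B}" by (auto simp: inj_on_def)
      show "W.subspace M" by fact
      fix p :: nat
      have "rhscoeff sW T WY k u v w c (int p) =
         (\<Sum>a\<in>{A..c-B}. sW (of_real ((real_of_int a / real T) ^ p / fact p)) (F a))"
        unfolding rhscoeff_def F_def[symmetric]
        by (simp, subst Sum_any.expand_superset[where A = "{A..c-B}"], auto dest: F0')
      hence "sW (of_nat (fact p) * of_nat T ^ p) (rhscoeff sW T WY k u v w c (int p)) =
          (\<Sum>a\<in>{A..c-B}. sW (of_int a ^ p) (F a))"
        using T by (simp add: W.scale_sum_right power_divide field_simps)
      moreover have "sW (of_nat (fact p) * of_nat T ^ p) (rhscoeff sW T WY k u v w c (int p)) \<in> M"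
        using lhsM kE sM W.subspace_scale by metis
      ultimately show "(\<Sum>a\<in>{A..c-B}. sW (of_int a ^ p) (F a)) \<in> M" by simp
    qed simp
    then have "F a0 \<in> M"
      using F0 W.subspace_0[OF sM] by (cases "a0 \<in> {A..c-B}") auto
    then show ?thesis unfolding F_def c_def by simp
  qed
  define P where "P m n = WY u m (WY v n w)" for m n
  have Fij: "(\<Sum>s\<le>k. sW (of_nat (k choose s) * (-1) ^ s) (P (i + int T * int (k - s)) (j + int T * int s))) \<in> M" for i j
    using stepA[of "- int T - i" "- int T - j"] unfolding prodcoeff_def P_def
    by (simp add: algebra_simps)
  obtain N where N: "\<And>j. j \<ge> N \<Longrightarrow> WY v j w = 0"
    using tw unfolding twisted_phi_module_def by meson
  have "\<forall>m n. nat (N - n) = d \<longrightarrow> P m n \<in> M" for d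
  proof (induction d rule: less_induct)
    case (less d)
    show ?case
    proof (intro allI impI)
      fix m n assume d: "nat (N - n) = d"
      show "P m n \<in> M"
      proof (cases "n \<ge> N")
        case True
        then show ?thesis using N[OF True] module_hom.zero[OF lin] W.subspace_0[OF sM]
          by (simp add: P_def)
      next
        case False
        define f where "f s = sW (of_nat (k choose s) * (-1) ^ s) (P (m - int T * int k + int T * int (k - s)) (n + int T * int s))" for s
        have "{..k} = insert 0 {1..k}" by auto
        then have "sum f {..k} = f 0 + sum f {1..k}" by simp
        moreover have "f 0 = P m n" by (simp add: f_def)
        moreover have "sum f {1..k} \<in> M"
        proof (intro W.subspace_sum[OF sM])
          fix s assume s: "s \<in> {1..k}"
          have "int T * int s \<ge> int T * 1" using s by (intro mult_left_mono) auto
          then have "nat (N - (n + int T * int s)) < d" using s T False d by linarith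
          then have "P (m - int T * int k + int T * int (k - s)) (n + int T * int s) \<in> M"
            using less.IH by blast
          then show "f s \<in> M" unfolding f_def using sM W.subspace_scale by blast
        qed
        moreover have "sum f {..k} \<in> M" using Fij[of "m - int T * int k" n] by (simp add: f_def)
        ultimately have "P m n = sum f {..k} - sum f {1..k}" "sum f {..k} \<in> M" "sum f {1..k} \<in> M" by simp_all
        then show ?thesis using W.subspace_diff[OF sM] by metis
      qed
    qed
  qed
  then show ?thesis unfolding M_def P_def by blast
qed

theorem proposition2p8:
  fixes sV :: "complex \<Rightarrow> 'v::ab_group_add \<Rightarrow> 'v" and vac :: 'v
    and VY :: "'v \<Rightarrow> int \<Rightarrow> 'v \<Rightarrow> 'v" and g :: "'v \<Rightarrow> 'v" and T :: nat
    and sW :: "complex \<Rightarrow> 'w::ab_group_add \<Rightarrow> 'w" and WY :: "'v \<Rightarrow> int \<Rightarrow> 'w \<Rightarrow> 'w"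
    and U :: "'w set"
  assumes "vertex_algebra sV vac VY"
    and "va_automorphism sV vac VY g"
    and "T > 0" and "g ^^ T = id"
    and "twisted_phi_module sV vac VY g T sW WY"
  shows "generated_submodule sW WY U = module.span sW {WY v j w | v j w. w \<in> U}"
proof -
  note tw = assms(5)
  interpret W: vector_space sW using tw unfolding twisted_phi_module_def by auto
  define S where "S = {WY v j w | v j w. w \<in> U}"
  have lin: "\<And>v j. module_hom sW sW (WY v j)"
    using tw unfolding twisted_phi_module_def is_linear_def
    by (simp add: module_hom_iff_linear)
  have img: "WY u m ` S \<subseteq> W.span S" for u m
  proof
    fix y assume "y \<in> WY u m ` S"
    then obtain v j w where y: "y = WY u m (WY v j w)" and w: "w \<in> U" unfolding S_def by auto
    have "y \<in> W.span {WY x j w | x j. True}" using key[OF assms(3) tw] y by simp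
    also have "\<dots> \<subseteq> W.span S" using w by (intro W.span_mono) (auto simp: S_def)
    finally show "y \<in> W.span S" .
  qed
  have clos: "WY u m y \<in> W.span S" if "y \<in> W.span S" for u m y
  proof -
    have "WY u m y \<in> WY u m ` W.span S" using that by simp
    also have "\<dots> = W.span (WY u m ` S)" using module_hom.span_image[OF lin] by metis
    also have "\<dots> \<subseteq> W.span (W.span S)" using img by (intro W.span_mono)
    finally show ?thesis by (simp add: W.span_span)
  qed
  have US: "U \<subseteq> W.span S"
  proof
    fix w assume "w \<in> U"
    moreover have "WY vac (- int T) w = w" using tw unfolding twisted_phi_module_def by simp
    ultimately have "w \<in> S" unfolding S_def by (metis (mono_tags, lifting) mem_Collect_eq)
    then show "w \<in> W.span S" by (rule W.span_base)
  qed
  have sub: "is_submodule sW WY (W.span S)"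
    unfolding is_submodule_def using clos by simp
  have "generated_submodule sW WY U \<subseteq> W.span S"
    unfolding generated_submodule_def using sub US by blast
  moreover have "W.span S \<subseteq> generated_submodule sW WY U"
    unfolding generated_submodule_def
  proof (rule Inter_greatest)
    fix S' assume "S' \<in> {S. is_submodule sW WY S \<and> U \<subseteq> S}"
    then have S': "W.subspace S'" "\<And>v j w. w \<in> S' \<Longrightarrow> WY v j w \<in> S'" "U \<subseteq> S'"
      unfolding is_submodule_def by auto
    have "S \<subseteq> S'" unfolding S_def using S' by blast
    then show "W.span S \<subseteq> S'" using S'(1) by (rule W.span_minimal)
  qed
  ultimately show ?thesis unfolding S_def by blast
qed

end
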